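(* Let $G=(Q,\Sigma,\delta,\widetilde{\pi})$ be a PFSA, let $s$ denote growing prefixes of a realization generated by $G$, and let $\epsilon>0$. If $x\in\Sigma^\star$ is $\epsilon$-synchronizing, with $\|\wp_x-e^{q}\|_\infty\le\epsilon$ for the state $q\in Q$, then $$\lim_{|s|\to\infty}\|\phi^s(x)-\widetilde{\pi}(q,\cdot)\|_\infty\le\epsilon\quad\text{almost surely}.$$
   Context: $\Sigma=\{\sigma_1,\dots,\sigma_{|\Sigma|}\}$ is a finite alphabet. A PFSA has finite state set $Q=\{q_1,\dots,q_{|Q|}\}$, transition function $\delta:Q\times\Sigma\to Q$, and symbol probabilities $\widetilde{\pi}:Q\times\Sigma\to[0,1]$ (rows summing to 1), strongly connected; $\widetilde{\pi}(q,\cdot)$ denotes the distribution $(\widetilde{\pi}(q,\sigma_1),\dots,\widetilde{\pi}(q,\sigma_{|\Sigma|}))$. The transformation matrices $\Gamma_\sigma\in[0,1]^{|Q|\times|Q|}$ have $(\Gamma_\sigma)_{ij}=\widetilde{\pi}(q_i,\sigma)$ if $\delta(q_i,\sigma)=q_j$ and $0$ otherwise. Let $\wp_\lambda$ be the stationary distribution of the Markov chain on $Q$ with transition matrix $M_{ij}=\sum_{\sigma:\delta(q_i,\sigma)=q_j}\widetilde{\pi}(q_i,\sigma)$, and for $x=\sigma_{r_1}\cdots\sigma_{r_m}$ let $\wp_x=\wp_\lambda\prod_{j=1}^m\Gamma_{\sigma_{r_j}}/\|\wp_\lambda\prod_{j=1}^m\Gamma_{\sigma_{r_j}}\|_1$.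 Let $e^i$ denote the $i$-th standard basis vector in $\mathbb{R}^{|Q|}$ (the distribution concentrated on $q_i$), and $\mathcal{E}=\{e^1,\dots,e^{|Q|}\}$. A string $x$ is $\epsilon$-synchronizing if $\|\wp_x-e\|_\infty\le\epsilon$ for some $e\in\mathcal{E}$. For a string $s$, $\#^s(y)$ is the overlapping count of occurrences of the substring $y$ in $s$, and the symbolic derivative $\phi^s(x)\in\mathbb{R}^{|\Sigma|}$ is the distribution $\phi^s(x)|_i=\#^s(x\sigma_i)/\sum_j\#^s(x\sigma_j)$. *)

theory Defs
  imports "HOL-Probability.Probability"
begin

text \<open>Vectors indexed by Q
  (resp. Sigma) are functions 'q \<Rightarrow> real (resp. 'a \<Rightarrow> real);
  matrices are functions 'q \<Rightarrow> 'q \<Rightarrow> real.\<close>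

definition pfsa :: "('q::finite \<Rightarrow> 'a::finite \<Rightarrow> 'q) \<Rightarrow> ('q \<Rightarrow> 'a \<Rightarrow> real) \<Rightarrow> bool" where
  "pfsa delta pit \<longleftrightarrow>
     (\<forall>q \<sigma>. 0 \<le> pit q \<sigma>) \<and>
     (\<forall>q. (\<Sum>\<sigma>\<in>UNIV. pit q \<sigma>) = 1) \<and>
     (\<forall>q q'. (q, q') \<in> {(p, delta p \<sigma>) | p \<sigma>. 0 < pit p \<sigma>}\<^sup>*)"

definition Gamma :: "('q::finite \<Rightarrow> 'a \<Rightarrow> 'q) \<Rightarrow> ('q \<Rightarrow> 'a \<Rightarrow> real) \<Rightarrow> 'a \<Rightarrow> 'q \<Rightarrow> 'q \<Rightarrow> real" where
  "Gamma delta pit \<sigma> = (\<lambda>i j. if delta i \<sigma> = j then pit i \<sigma> else 0)"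

definition trans_mat :: "('q::finite \<Rightarrow> 'a::finite \<Rightarrow> 'q) \<Rightarrow> ('q \<Rightarrow> 'a \<Rightarrow> real) \<Rightarrow> 'q \<Rightarrow> 'q \<Rightarrow> real" where
  "trans_mat delta pit = (\<lambda>i j. \<Sum>\<sigma>\<in>{\<sigma>. delta i \<sigma> = j}. pit i \<sigma>)"

definition vecmat :: "('q::finite \<Rightarrow> real) \<Rightarrow> ('q \<Rightarrow> 'q \<Rightarrow> real) \<Rightarrow> 'q \<Rightarrow> real" where
  "vecmat p A = (\<lambda>j. \<Sum>i\<in>UNIV. p i * A i j)"

text \<open>Stationary distribution wp_lambda (unique for a strongly connected PFSA).\<close>
definition stat_dist :: "('q::finite \<Rightarrow> 'a::finite \<Rightarrow> 'q) \<Rightarrow> ('q \<Rightarrow> 'a \<Rightarrow> real) \<Rightarrow> 'q \<Rightarrow> real" where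
  "stat_dist delta pit = (THE p. (\<forall>q. 0 \<le> p q) \<and> (\<Sum>q\<in>UNIV. p q) = 1
                                   \<and> vecmat p (trans_mat delta pit) = p)"

definition wp_unnorm :: "('q::finite \<Rightarrow> 'a::finite \<Rightarrow> 'q) \<Rightarrow> ('q \<Rightarrow> 'a \<Rightarrow> real) \<Rightarrow> 'a list \<Rightarrow> 'q \<Rightarrow> real" where
  "wp_unnorm delta pit x = foldl (\<lambda>p \<sigma>. vecmat p (Gamma delta pit \<sigma>)) (stat_dist delta pit) x"

definition norm1 :: "('i::finite \<Rightarrow> real) \<Rightarrow> real" where
  "norm1 v = (\<Sum>i\<in>UNIV. \<bar>v i\<bar>)"

definition norm_inf :: "('i::finite \<Rightarrow> real) \<Rightarrow> real" where
  "norm_inf v = Max (range (\<lambda>i. \<bar>v i\<bar>))"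

definition wp :: "('q::finite \<Rightarrow> 'a::finite \<Rightarrow> 'q) \<Rightarrow> ('q \<Rightarrow> 'a \<Rightarrow> real) \<Rightarrow> 'a list \<Rightarrow> 'q \<Rightarrow> real" where
  "wp delta pit x = (\<lambda>q. wp_unnorm delta pit x q / norm1 (wp_unnorm delta pit x))"

definition basis_vec :: "'q \<Rightarrow> 'q \<Rightarrow> real" where
  "basis_vec q = (\<lambda>q'. if q' = q then 1 else 0)"

definition eps_synchronizing :: "('q::finite \<Rightarrow> 'a::finite \<Rightarrow> 'q) \<Rightarrow> ('q \<Rightarrow> 'a \<Rightarrow> real) \<Rightarrow> real \<Rightarrow> 'a list \<Rightarrow> bool" where
  "eps_synchronizing delta pit \<epsilon> x \<longleftrightarrow> (\<exists>q. norm_inf (\<lambda>i. wp delta pit x i - basis_vec q i) \<le> \<epsilon>)"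

definition occ_count :: "'a list \<Rightarrow> 'a list \<Rightarrow> nat" where
  "occ_count s y = card {i. i + length y \<le> length s \<and> take (length y) (drop i s) = y}"

definition symb_deriv :: "'a::finite list \<Rightarrow> 'a list \<Rightarrow> 'a \<Rightarrow> real" where
  "symb_deriv s x = (\<lambda>\<sigma>. real (occ_count s (x @ [\<sigma>])) / (\<Sum>\<sigma>'\<in>UNIV. real (occ_count s (x @ [\<sigma>']))))"

text \<open>M is the law of a realization (infinite symbol sequence) generated by the PFSA
  started in its stationary distribution: a probability measure on symbol streams
  whose cylinder probabilities are Pr(s starts with w) = || wp_lambda Gamma_w ||_1.
  (These finite-dimensional distributions determine the measure uniquely.)\<close>
definition realization_measure :: "('q::finite \<Rightarrow> 'a::finite \<Rightarrow> 'q) \<Rightarrow> ('q \<Rightarrow> 'a \<Rightarrow> real) \<Rightarrow> 'a stream measure \<Rightarrow> bool" where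
  "realization_measure delta pit M \<longleftrightarrow>
     prob_space M \<and> sets M = sets (stream_space (count_space UNIV)) \<and>
     (\<forall>w. measure M {\<omega> \<in> space M. stake (length w) \<omega> = w} = norm1 (wp_unnorm delta pit w))"

end

theory Submission
  imports Defs "HOL-Library.Discrete_Functions"
begin

locale pf =
  fixes delta :: "'q::finite \<Rightarrow> 'a::finite \<Rightarrow> 'q" and pit :: "'q \<Rightarrow> 'a \<Rightarrow> real"
  assumes pf: "pfsa delta pit"
begin

abbreviation "TM \<equiv> trans_mat delta pit"
abbreviation "G \<equiv> Gamma delta pit"

lemma pit_nonneg: "0 \<le> pit i s" using pf unfolding pfsa_def by auto
lemma pit_sum: "(\<Sum>s\<in>UNIV. pit i s) = 1" using pf unfolding pfsa_def by auto
lemma reach: "(i, j) \<in> {(p, delta p s) | p s. 0 < pit p s}\<^sup>*" using pf unfolding pfsa_def by auto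

lemma TM_alt: "TM i j = (\<Sum>s\<in>UNIV. G s i j)"
  unfolding trans_mat_def Gamma_def by (simp add: sum.If_cases)

lemma TM_nonneg: "0 \<le> TM i j"
  unfolding trans_mat_def by (simp add: sum_nonneg pit_nonneg)

lemma G_nonneg: "0 \<le> G s i j"
  unfolding Gamma_def by (simp add: pit_nonneg)

lemma G_row: "(\<Sum>j\<in>UNIV. G s i j) = pit i s"
  unfolding Gamma_def by simp

lemma TM_row: "(\<Sum>j\<in>UNIV. TM i j) = 1"
  unfolding TM_alt by (subst sum.swap) (simp add: G_row pit_sum)

lemma vecmat_sum: "(\<Sum>j\<in>UNIV. vecmat g TM j) = (\<Sum>i\<in>UNIV. g i)"
proof -
  have "(\<Sum>j\<in>UNIV. vecmat g TM j) = (\<Sum>i\<in>UNIV. g i * (\<Sum>j\<in>UNIV. TM i j))"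
    unfolding vecmat_def by (subst sum.swap) (simp add: sum_distrib_left)
  then show ?thesis by (simp add: TM_row)
qed

definition fixed :: "('q \<Rightarrow> real) \<Rightarrow> bool" where
  "fixed g \<longleftrightarrow> vecmat g TM = g"

lemma fixed_lin: "fixed g \<Longrightarrow> fixed h \<Longrightarrow> fixed (\<lambda>i. a * g i + b * h i)"
  unfolding fixed_def vecmat_def
  by (auto simp: fun_eq_iff algebra_simps sum.distrib sum_distrib_left[symmetric])

lemma fixed_abs: assumes "fixed g" shows "fixed (\<lambda>i. \<bar>g i\<bar>)"
proof -
  have le: "\<bar>g j\<bar> \<le> vecmat (\<lambda>i. \<bar>g i\<bar>) TM j" for j
  proof -
    have "\<bar>g j\<bar> = \<bar>\<Sum>i\<in>UNIV. g i * TM i j\<bar>"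
      using assms unfolding fixed_def vecmat_def by (metis (no_types, lifting))
    also have "\<dots> \<le> (\<Sum>i\<in>UNIV. \<bar>g i * TM i j\<bar>)" by (rule sum_abs)
    also have "\<dots> = vecmat (\<lambda>i. \<bar>g i\<bar>) TM j"
      unfolding vecmat_def by (simp add: abs_mult TM_nonneg)
    finally show ?thesis .
  qed
  have "(\<Sum>j\<in>UNIV. vecmat (\<lambda>i. \<bar>g i\<bar>) TM j - \<bar>g j\<bar>) = 0"
    by (simp add: sum_subtractf vecmat_sum)
  then have "\<forall>j\<in>UNIV. vecmat (\<lambda>i. \<bar>g i\<bar>) TM j - \<bar>g j\<bar> = 0"
    by (subst sum_nonneg_eq_0_iff[symmetric]) (auto simp: le)
  then show ?thesis unfolding fixed_def by auto
qed

lemma fixed_zero: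
  assumes "fixed g" "\<And>i. 0 \<le> g i" "g j = 0" shows "g i = 0"
proof -
  have "(i, j) \<in> {(p, delta p s) | p s. 0 < pit p s}\<^sup>*" by (rule reach)
  then show ?thesis
  proof (induction rule: converse_rtrancl_induct)
    case base then show ?case using assms by simp
  next
    case (step i k)
    then obtain s where k: "k = delta i s" "0 < pit i s" by auto
    have "pit i s \<le> TM i k"
      unfolding trans_mat_def using k by (intro member_le_sum) (auto simp: pit_nonneg)
    then have pos: "0 < TM i k" using k by simp
    have "g i * TM i k \<le> (\<Sum>l\<in>UNIV. g l * TM l k)"
      by (rule member_le_sum) (auto simp: assms(2) TM_nonneg)
    also have "\<dots> = g k" using assms(1) unfolding fixed_def vecmat_def by metis
    finally have "g i * TM i k \<le> 0" using step by simp
    then have "g i \<le> 0" using pos by (simp add: mult_le_0_iff)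
    then show ?case using assms(2)[of i] by simp
  qed
qed

lemma fixed_sum0: assumes "fixed g" "(\<Sum>i\<in>UNIV. g i) = 0" shows "g = (\<lambda>_. 0)"
proof -
  define h where "h i = (1/2) * \<bar>g i\<bar> + (1/2) * g i" for i
  have fh: "fixed h" unfolding h_def by (intro fixed_lin fixed_abs assms(1))
  have hn: "0 \<le> h i" for i unfolding h_def by (simp add: abs_if)
  obtain j where "g j \<le> 0"
  proof (rule ccontr)
    assume "\<not> thesis"
    then have "\<forall>j. 0 < g j" using that by (meson not_le)
    then have "0 < (\<Sum>i\<in>UNIV. g i)" by (intro sum_pos) auto
    then show False using assms by simp
  qed
  then have "h j = 0" unfolding h_def by simp
  then have h0: "h i = 0" for i using fixed_zero[OF fh hn] by blast
  have gle: "g i \<le> 0" for i using h0[of i] unfolding h_def by (auto split: if_splits)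
  have "(\<Sum>i\<in>UNIV. - g i) = 0" using assms(2) by (simp add: sum_negf)
  then have "\<forall>i\<in>UNIV. - g i = 0"
    by (subst sum_nonneg_eq_0_iff[symmetric]) (auto simp: gle)
  then show ?thesis by auto
qed

lemma fixed_unique:
  assumes "fixed g" "fixed h" "(\<Sum>i\<in>UNIV. g i) = (\<Sum>i\<in>UNIV. h i)" shows "g = h"
proof -
  have "fixed (\<lambda>i. 1 * g i + (-1) * h i)" by (rule fixed_lin[OF assms(1,2)])
  moreover have "(\<Sum>i\<in>UNIV. 1 * g i + (-1) * h i) = 0" using assms(3) by (simp add: sum_subtractf)
  ultimately have "(\<lambda>i. 1 * g i + (-1) * h i) = (\<lambda>_. 0)" by (rule fixed_sum0)
  then show ?thesis by (auto simp: fun_eq_iff)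
qed

definition Lmap :: "real^'q \<Rightarrow> real^'q" where
  "Lmap v = (\<chi> j. v$j - (\<Sum>i\<in>UNIV. v$i * TM i j))"

lemma Lmap_linear: "linear Lmap"
  by (rule linearI) (simp_all add: Lmap_def vec_eq_iff ring_distribs sum.distrib sum_distrib_left mult.assoc sum_subtractf)

lemma exists_fixed: "\<exists>g. fixed g \<and> g \<noteq> (\<lambda>_. 0)"
proof -
  obtain j0 :: 'q where True by simp
  have nsurj: "\<not> surj Lmap"
  proof
    assume "surj Lmap"
    then obtain v where v: "Lmap v = (\<chi> j. if j = j0 then 1 else 0)" unfolding surj_def by metis
    have "(\<Sum>j\<in>UNIV. (Lmap v)$j) = (\<Sum>j\<in>UNIV. v$j) - (\<Sum>j\<in>UNIV. vecmat (\<lambda>i. v$i) TM j)"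
      by (simp add: Lmap_def sum_subtractf vecmat_def)
    also have "\<dots> = 0" by (simp add: vecmat_sum)
    finally show False using v by simp
  qed
  have "\<not> inj Lmap"
  proof
    assume "inj Lmap"
    then have "surj Lmap" by (rule linear_injective_imp_surjective[OF Lmap_linear]) simp
    then show False using nsurj by simp
  qed
  then have "\<exists>v. Lmap v = 0 \<and> v \<noteq> 0"
    by (simp add: linear_injective_0[OF Lmap_linear])
  then obtain v where v: "Lmap v = 0" "v \<noteq> 0" by blast
  define g where "g i = v$i" for i
  have l0: "(Lmap v)$j = 0" for j using v(1) by simp
  have vj: "(\<Sum>i\<in>UNIV. v$i * TM i j) = v$j" for j
  proof -
    have "v$j - (\<Sum>i\<in>UNIV. v$i * TM i j) = 0" using l0[of j] unfolding Lmap_def by simp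
    then show ?thesis by linarith
  qed
  have "fixed g" unfolding fixed_def vecmat_def g_def by (rule ext) (rule vj)
  moreover have "g \<noteq> (\<lambda>_. 0)" using v(2) unfolding g_def by (metis vec_eq_iff zero_index)
  ultimately show ?thesis by blast
qed

lemma exists_stat: "\<exists>p. (\<forall>q. 0 \<le> p q) \<and> (\<Sum>q\<in>UNIV. p q) = 1 \<and> vecmat p TM = p"
proof -
  obtain g where g: "fixed g" "g \<noteq> (\<lambda>_. 0)" using exists_fixed by blast
  define a where "a = (\<Sum>i\<in>UNIV. \<bar>g i\<bar>)"
  obtain i0 where "g i0 \<noteq> 0" using g(2) by auto
  then have "0 < \<bar>g i0\<bar>" by simp
  also have "\<bar>g i0\<bar> \<le> a" unfolding a_def by (rule member_le_sum) auto
  finally have apos: "0 < a" .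
  define p where "p i = (1/a) * \<bar>g i\<bar> + 0 * g i" for i
  have "fixed p" unfolding p_def by (intro fixed_lin fixed_abs g(1))
  moreover have "(\<Sum>q\<in>UNIV. p q) = 1" using apos unfolding p_def a_def
    by (simp add: sum_divide_distrib[symmetric])
  moreover have "\<forall>q. 0 \<le> p q" using apos unfolding p_def by simp
  ultimately show ?thesis unfolding fixed_def by blast
qed

abbreviation "P0 \<equiv> stat_dist delta pit"

lemma stat_props: "(\<forall>q. 0 \<le> P0 q) \<and> (\<Sum>q\<in>UNIV. P0 q) = 1 \<and> vecmat P0 TM = P0"
proof -
  obtain p where p: "(\<forall>q. 0 \<le> p q) \<and> (\<Sum>q\<in>UNIV. p q) = 1 \<and> vecmat p TM = p"
    using exists_stat by blast
  show ?thesis unfolding stat_dist_def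
  proof (rule theI[of _ p])
    show "(\<forall>q. 0 \<le> p q) \<and> (\<Sum>q\<in>UNIV. p q) = 1 \<and> vecmat p TM = p" by (rule p)
    fix p' assume "(\<forall>q. 0 \<le> p' q) \<and> (\<Sum>q\<in>UNIV. p' q) = 1 \<and> vecmat p' TM = p'"
    then show "p' = p" using p fixed_unique unfolding fixed_def by metis
  qed
qed

lemma P0_nonneg: "0 \<le> P0 q" and P0_sum: "(\<Sum>q\<in>UNIV. P0 q) = 1" and P0_fixed: "vecmat P0 TM = P0"
  using stat_props by auto

definition L2map :: "real^'q \<Rightarrow> real^'q" where
  "L2map v = (\<chi> j. v$j - (\<Sum>i\<in>UNIV. v$i * TM i j) + (\<Sum>i\<in>UNIV. v$i) * P0 j)"

lemma L2map_linear: "linear L2map"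
  by (rule linearI) (simp_all add: L2map_def vec_eq_iff ring_distribs sum.distrib sum_distrib_left mult.assoc sum_subtractf)

lemma poisson:
  assumes "(\<Sum>j\<in>UNIV. d j) = 0"
  shows "\<exists>g. \<forall>j. g j - vecmat g TM j = d j"
proof -
  have sumL2: "(\<Sum>j\<in>UNIV. (L2map v)$j) = (\<Sum>j\<in>UNIV. v$j)" for v
  proof -
    have "(\<Sum>j\<in>UNIV. (L2map v)$j) = (\<Sum>j\<in>UNIV. v$j) - (\<Sum>j\<in>UNIV. vecmat (\<lambda>i. v$i) TM j)
        + (\<Sum>i\<in>UNIV. v$i) * (\<Sum>j\<in>UNIV. P0 j)"
      by (simp add: L2map_def sum.distrib sum_subtractf vecmat_def sum_distrib_left)
    then show ?thesis by (simp add: vecmat_sum P0_sum)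
  qed
  have "inj L2map"
  proof (subst linear_injective_0[OF L2map_linear], intro allI impI)
    fix v assume v: "L2map v = 0"
    have s0: "(\<Sum>j\<in>UNIV. v$j) = 0" using sumL2[of v] v by simp
    define g where "g i = v$i" for i
    have l0: "(L2map v)$j = 0" for j using v by simp
    have vj: "(\<Sum>i\<in>UNIV. v$i * TM i j) = v$j" for j
    proof -
      have "v$j - (\<Sum>i\<in>UNIV. v$i * TM i j) + (\<Sum>i\<in>UNIV. v$i) * P0 j = 0"
        using l0[of j] unfolding L2map_def by simp
      then show ?thesis using s0 by simp
    qed
    have "fixed g" unfolding fixed_def vecmat_def g_def by (rule ext) (rule vj)
    then have "g = (\<lambda>_. 0)" using s0 fixed_sum0 unfolding g_def by blast
    then show "v = 0" unfolding g_def by (metis vec_eq_iff zero_index)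
  qed
  then have "surj L2map" by (rule linear_injective_imp_surjective[OF L2map_linear]) simp
  then obtain v where v: "L2map v = (\<chi> j. d j)" unfolding surj_def by metis
  have s0: "(\<Sum>j\<in>UNIV. v$j) = 0" using sumL2[of v] v assms by simp
  have "v$j - (\<Sum>i\<in>UNIV. v$i * TM i j) + (\<Sum>i\<in>UNIV. v$i) * P0 j = d j" for j
  proof -
    have "(L2map v)$j = d j" using v by simp
    then show ?thesis unfolding L2map_def by simp
  qed
  then have "v$j - vecmat (\<lambda>i. v$i) TM j = d j" for j using s0 unfolding vecmat_def by simp
  then show ?thesis by blast
qed

end

lemma ni_ge: "\<bar>f i\<bar> \<le> norm_inf (f :: 'i::finite \<Rightarrow> real)"
  unfolding norm_inf_def by (rule Max_ge) auto

lemma ni_le: "(\<And>i. \<bar>f i\<bar> \<le> B) \<Longrightarrow> norm_inf (f :: 'i::finite \<Rightarrow> real) \<le> B"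
  unfolding norm_inf_def by (subst Max_le_iff) auto

lemma ni_lip: "norm_inf (f :: 'i::finite \<Rightarrow> real) \<le> norm_inf g + (\<Sum>i\<in>UNIV. \<bar>f i - g i\<bar>)"
proof (rule ni_le)
  fix i
  have "\<bar>f i - g i\<bar> \<le> (\<Sum>i\<in>UNIV. \<bar>f i - g i\<bar>)" by (rule member_le_sum) auto
  then show "\<bar>f i\<bar> \<le> norm_inf g + (\<Sum>i\<in>UNIV. \<bar>f i - g i\<bar>)" using ni_ge[of g i] by linarith
qed

lemma ni_tendsto:
  fixes F :: "nat \<Rightarrow> 'i::finite \<Rightarrow> real"
  assumes "\<And>i. (\<lambda>n. F n i) \<longlonglongrightarrow> L i"
  shows "(\<lambda>n. norm_inf (F n)) \<longlonglongrightarrow> norm_inf L"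
proof -
  define D where "D n = (\<Sum>i\<in>UNIV. \<bar>F n i - L i\<bar>)" for n
  have "(\<lambda>n. \<bar>F n i - L i\<bar>) \<longlonglongrightarrow> \<bar>L i - L i\<bar>" for i
    by (intro tendsto_intros assms)
  then have "D \<longlonglongrightarrow> (\<Sum>i\<in>UNIV. \<bar>L i - L i\<bar>)" unfolding D_def by (intro tendsto_sum) auto
  then have D0: "D \<longlonglongrightarrow> 0" by simp
  have lo: "(\<lambda>n. norm_inf L - D n) \<longlonglongrightarrow> norm_inf L - 0" by (intro tendsto_intros D0)
  have hi: "(\<lambda>n. norm_inf L + D n) \<longlonglongrightarrow> norm_inf L + 0" by (intro tendsto_intros D0)
  have l1: "norm_inf L - D n \<le> norm_inf (F n)" for n
  proof -
    have "norm_inf L \<le> norm_inf (F n) + (\<Sum>i\<in>UNIV. \<bar>L i - F n i\<bar>)" by (rule ni_lip)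
    moreover have "(\<Sum>i\<in>UNIV. \<bar>L i - F n i\<bar>) = D n" unfolding D_def by (simp add: abs_minus_commute)
    ultimately show ?thesis by linarith
  qed
  have l2: "norm_inf (F n) \<le> norm_inf L + D n" for n unfolding D_def by (rule ni_lip)
  show ?thesis
    by (rule tendsto_sandwich[OF _ _ lo[simplified] hi[simplified]]) (simp_all add: l1 l2)
qed

lemma interp:
  fixes s :: "nat \<Rightarrow> real"
  assumes mono: "mono s" and nn: "\<And>n. 0 \<le> s n"
    and lim: "(\<lambda>k. s (k^2) / real (k^2)) \<longlonglongrightarrow> m"
  shows "(\<lambda>n. s n / real n) \<longlonglongrightarrow> m"
proof -
  have r1: "(\<lambda>k. real k / real (Suc k)) \<longlonglongrightarrow> 1" by (rule LIMSEQ_n_over_Suc_n)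
  have r2: "(\<lambda>k. real (Suc k) / real k) \<longlonglongrightarrow> 1" by (rule LIMSEQ_Suc_n_over_n)
  define a where "a k = s (k^2) / real (k^2) * (real k / real (Suc k))^2" for k
  define b where "b k = s ((Suc k)^2) / real ((Suc k)^2) * (real (Suc k) / real k)^2" for k
  have la: "a \<longlonglongrightarrow> m * 1^2" unfolding a_def by (intro tendsto_intros lim r1)
  have lim': "(\<lambda>k. s ((Suc k)^2) / real ((Suc k)^2)) \<longlonglongrightarrow> m"
    using LIMSEQ_Suc[OF lim] .
  have lb: "b \<longlonglongrightarrow> m * 1^2" unfolding b_def by (intro tendsto_intros lim' r2)
  have fk: "filterlim floor_sqrt at_top at_top"
    unfolding filterlim_at_top
  proof
    fix Z :: nat
    show "eventually (\<lambda>n. Z \<le> floor_sqrt n) at_top"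
      unfolding eventually_at_top_linorder by (intro exI[of _ "Z^2"]) (auto intro: le_floor_sqrtI)
  qed
  have la': "(\<lambda>n. a (floor_sqrt n)) \<longlonglongrightarrow> m" using filterlim_compose[OF la fk] by simp
  have lb': "(\<lambda>n. b (floor_sqrt n)) \<longlonglongrightarrow> m" using filterlim_compose[OF lb fk] by simp
  have bounds: "a (floor_sqrt n) \<le> s n / real n \<and> s n / real n \<le> b (floor_sqrt n)" if n1: "1 \<le> n" for n
  proof -
    define k where "k = floor_sqrt n"
    have k1: "k^2 \<le> n" unfolding k_def by simp
    have k2: "n < (Suc k)^2" unfolding k_def by (rule Suc_floor_sqrt_power2_gt)
    have kpos: "0 < k" unfolding k_def using n1 by simp
    have npos: "0 < real n" using n1 by simp
    have k2r: "real n \<le> (1 + real k)^2"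
    proof -
      have "real n \<le> real ((Suc k)^2)" using k2 by (simp only: of_nat_le_iff)
      then show ?thesis by simp
    qed
    have k1r: "(real k)^2 \<le> real n"
    proof -
      have "real (k^2) \<le> real n" using k1 by (simp only: of_nat_le_iff)
      then show ?thesis by simp
    qed
    have s1: "s (k^2) \<le> s n" using mono k1 by (simp add: monoD)
    have s2: "s n \<le> s ((Suc k)^2)" using mono k2 by (simp add: monoD)
    have ea: "a k = s (k^2) / real ((Suc k)^2)"
      unfolding a_def using kpos by (simp add: power_divide field_simps)
    have eb: "b k = s ((Suc k)^2) / real (k^2)"
      unfolding b_def using kpos by (simp add: power_divide field_simps)
    have "s (k^2) / real ((Suc k)^2) \<le> s (k^2) / real n"
      using k2r npos nn[of "k^2"] by (intro divide_left_mono) auto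
    also have "\<dots> \<le> s n / real n" using s1 npos by (simp add: divide_right_mono)
    finally have A: "a k \<le> s n / real n" using ea by simp
    have "s n / real n \<le> s ((Suc k)^2) / real n" using s2 npos by (simp add: divide_right_mono)
    also have "\<dots> \<le> s ((Suc k)^2) / real (k^2)"
      using k1r kpos npos nn[of "(Suc k)^2"] by (intro divide_left_mono) auto
    finally have B: "s n / real n \<le> b k" using eb by simp
    show ?thesis using A B unfolding k_def by simp
  qed
  show ?thesis
  proof (rule tendsto_sandwich[OF _ _ la' lb'])
    show "\<forall>\<^sub>F n in sequentially. a (floor_sqrt n) \<le> s n / real n"
      unfolding eventually_at_top_linorder using bounds by blast
    show "\<forall>\<^sub>F n in sequentially. s n / real n \<le> b (floor_sqrt n)"
      unfolding eventually_at_top_linorder using bounds by blast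
  qed
qed

lemma var_bound:
  fixes c :: "nat \<Rightarrow> nat \<Rightarrow> real" and f :: "nat \<Rightarrow> real"
  assumes sym: "\<And>i j. c i j = c j i" and bd: "\<And>i j. \<bar>c i j\<bar> \<le> 1"
    and fc: "\<And>i k. c i (i + L + k) = f k"
    and F: "\<And>K. \<bar>\<Sum>k<K. f k\<bar> \<le> B" and L1: "1 \<le> L"
  shows "\<bar>\<Sum>i<N. \<Sum>j<N. c i j\<bar> \<le> real N * (2 * real L + 2 * B)"
proof -
  have row: "\<bar>\<Sum>j<N. c i j\<bar> \<le> 2 * real L + 2 * B" if iN: "i < N" for i
  proof -
    define a where "a = i + 1 - L"
    define b where "b = min N (i + L)"
    have ab: "a \<le> b" "b \<le> N" unfolding a_def b_def using iN L1 by auto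
    have split: "(\<Sum>j<N. c i j) = (\<Sum>j\<in>{0..<a}. c i j) + (\<Sum>j\<in>{a..<b}. c i j) + (\<Sum>j\<in>{b..<N}. c i j)"
      using ab by (simp add: sum.atLeastLessThan_concat atLeast0LessThan[symmetric])
    have p3: "(\<Sum>j\<in>{0..<a}. c i j) = (\<Sum>k<a. f k)"
    proof -
      have "(\<Sum>j\<in>{0..<a}. c i j) = (\<Sum>j<a. f (a - Suc j))"
        unfolding atLeast0LessThan
      proof (rule sum.cong)
        fix j assume "j \<in> {..<a}"
        then have "j < a" by simp
        then have "i = j + L + (a - Suc j)" unfolding a_def by auto
        then have "c j i = f (a - Suc j)" using fc[of j "a - Suc j"] by simp
        then show "c i j = f (a - Suc j)" using sym by simp
      qed simp
      also have "\<dots> = (\<Sum>k<a. f k)" by (rule sum.nat_diff_reindex)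
      finally show ?thesis .
    qed
    have p2: "(\<Sum>j\<in>{b..<N}. c i j) = (\<Sum>k<N - (i + L). f k)"
    proof (cases "i + L \<le> N")
      case True
      then have bb: "b = i + L" unfolding b_def by simp
      have "(\<Sum>j\<in>{b..<N}. c i j) = (\<Sum>k\<in>{0..<N - (i + L)}. c i (k + (i + L)))"
        using True bb sum.shift_bounds_nat_ivl[of "c i" 0 "i + L" "N - (i + L)"] by simp
      also have "\<dots> = (\<Sum>k<N - (i + L). f k)"
        unfolding atLeast0LessThan
      proof (rule sum.cong)
        fix k show "c i (k + (i + L)) = f k" using fc[of i k] by (simp add: add.commute)
      qed simp
      finally show ?thesis .
    next
      case False then show ?thesis unfolding b_def by simp
    qed
    have p1: "\<bar>\<Sum>j\<in>{a..<b}. c i j\<bar> \<le> 2 * real L"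
    proof -
      have "\<bar>\<Sum>j\<in>{a..<b}. c i j\<bar> \<le> (\<Sum>j\<in>{a..<b}. \<bar>c i j\<bar>)" by (rule sum_abs)
      also have "\<dots> \<le> (\<Sum>j\<in>{a..<b}. 1)" by (intro sum_mono bd)
      also have "\<dots> = real (b - a)" by simp
      also have "\<dots> \<le> 2 * real L" unfolding a_def b_def by linarith
      finally show ?thesis .
    qed
    have "\<bar>\<Sum>j<N. c i j\<bar> \<le> \<bar>\<Sum>k<a. f k\<bar> + \<bar>\<Sum>j\<in>{a..<b}. c i j\<bar> + \<bar>\<Sum>k<N - (i + L). f k\<bar>"
      unfolding split p3 p2 by linarith
    then show ?thesis using p1 F[of a] F[of "N - (i + L)"] by linarith
  qed
  have "\<bar>\<Sum>i<N. \<Sum>j<N. c i j\<bar> \<le> (\<Sum>i<N. \<bar>\<Sum>j<N. c i j\<bar>)" by (rule sum_abs)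
  also have "\<dots> \<le> (\<Sum>i<N. 2 * real L + 2 * B)" by (intro sum_mono row) simp
  also have "\<dots> = real N * (2 * real L + 2 * B)" by simp
  finally show ?thesis .
qed

context pf begin

definition rw :: "('q \<Rightarrow> real) \<Rightarrow> 'a list \<Rightarrow> 'q \<Rightarrow> real" where
  "rw r w = foldl (\<lambda>p s. vecmat p (G s)) r w"

definition total :: "('q \<Rightarrow> real) \<Rightarrow> real" where
  "total r = (\<Sum>i\<in>UNIV. r i)"

definition stepc :: "'a option \<Rightarrow> ('q \<Rightarrow> real) \<Rightarrow> 'q \<Rightarrow> real" where
  "stepc oc r = (case oc of None \<Rightarrow> vecmat r TM | Some s \<Rightarrow> vecmat r (G s))"

definition ok :: "'a option \<Rightarrow> 'a set" where
  "ok oc = (case oc of None \<Rightarrow> UNIV | Some s \<Rightarrow> {s})"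

definition matches :: "'a option list \<Rightarrow> 'a list \<Rightarrow> bool" where
  "matches c w \<longleftrightarrow> list_all2 (\<lambda>oc a. a \<in> ok oc) c w"

definition runc :: "('q \<Rightarrow> real) \<Rightarrow> 'a option list \<Rightarrow> 'q \<Rightarrow> real" where
  "runc r c = foldl (\<lambda>p oc. stepc oc p) r c"

lemma wp_unnorm_rw: "wp_unnorm delta pit w = rw P0 w"
  unfolding wp_unnorm_def rw_def by simp

lemma rw_snoc: "rw r (w @ [s]) = vecmat (rw r w) (G s)"
  unfolding rw_def by simp

lemma rw_append: "rw r (u @ v) = rw (rw r u) v"
  unfolding rw_def by simp

lemma runc_snoc: "runc r (c @ [oc]) = stepc oc (runc r c)"
  unfolding runc_def by simp

lemma runc_append: "runc r (c @ d) = runc (runc r c) d"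
  unfolding runc_def by simp

lemma runc_Some: "runc r (map Some w) = rw r w"
  unfolding runc_def rw_def by (induction w arbitrary: r) (auto simp: stepc_def)

lemma runc_None: "runc r (replicate k None) = ((\<lambda>p. vecmat p TM) ^^ k) r"
proof (induction k)
  case 0 then show ?case by (simp add: runc_def)
next
  case (Suc k)
  have "runc r (replicate (Suc k) None) = runc r (replicate k None @ [None])"
    by (simp add: replicate_append_same)
  also have "\<dots> = vecmat (runc r (replicate k None)) TM" by (simp only: runc_snoc stepc_def option.case)
  finally show ?case using Suc by simp
qed

lemma vecmat_sum_fun: "vecmat (\<lambda>i. \<Sum>w\<in>W. f w i) A j = (\<Sum>w\<in>W. vecmat (f w) A j)"
  unfolding vecmat_def by (simp add: sum_distrib_right) (rule sum.swap)

lemma sum_G_TM: "(\<Sum>s\<in>UNIV. vecmat r (G s) j) = vecmat r TM j"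
  unfolding vecmat_def TM_alt by (simp add: sum_distrib_left) (rule sum.swap)

lemma stepc_ok: "(\<Sum>s\<in>ok oc. vecmat r (G s) j) = stepc oc r j"
  by (cases oc) (simp_all add: ok_def stepc_def sum_G_TM)

lemma matches_length: "matches c w \<Longrightarrow> length w = length c"
  unfolding matches_def by (simp add: list_all2_lengthD)

lemma finite_matches: "finite {w. matches c w}"
proof -
  have "{w. matches c w} \<subseteq> {w. length w = length c}" using matches_length by auto
  moreover have "finite {w::'a list. length w = length c}"
    using finite_lists_length_eq[of "UNIV::'a set" "length c"] by simp
  ultimately show ?thesis by (rule finite_subset)
qed

lemma matches_snoc: "{w. matches (c @ [oc]) w} = (\<lambda>(w, s). w @ [s]) ` ({w. matches c w} \<times> ok oc)"
proof (intro set_eqI iffI)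
  fix w assume "w \<in> {w. matches (c @ [oc]) w}"
  then have m: "list_all2 (\<lambda>oc a. a \<in> ok oc) (c @ [oc]) w" unfolding matches_def by simp
  then obtain u s where "w = u @ [s]" "list_all2 (\<lambda>oc a. a \<in> ok oc) c u" "s \<in> ok oc"
    by (auto simp: list_all2_append1 list_all2_Cons1)
  then show "w \<in> (\<lambda>(w, s). w @ [s]) ` ({w. matches c w} \<times> ok oc)"
    unfolding matches_def by auto
next
  fix w assume "w \<in> (\<lambda>(w, s). w @ [s]) ` ({w. matches c w} \<times> ok oc)"
  then show "w \<in> {w. matches (c @ [oc]) w}"
    unfolding matches_def by (auto simp: list_all2_appendI)
qed

lemma sum_matches: "(\<Sum>w\<in>{w. matches c w}. rw r w j) = runc r c j"
proof (induction c arbitrary: j rule: rev_induct)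
  case Nil
  have "{w. matches [] w} = {[]}" unfolding matches_def by auto
  then show ?case by (simp add: rw_def runc_def)
next
  case (snoc oc c)
  have inj: "inj_on (\<lambda>(w, s). w @ [s]) ({w. matches c w} \<times> ok oc)"
    by (auto simp: inj_on_def)
  have "(\<Sum>w\<in>{w. matches (c @ [oc]) w}. rw r w j)
      = (\<Sum>(w, s)\<in>{w. matches c w} \<times> ok oc. rw r (w @ [s]) j)"
    unfolding matches_snoc by (subst sum.reindex[OF inj]) (simp add: case_prod_unfold)
  also have "\<dots> = (\<Sum>w\<in>{w. matches c w}. \<Sum>s\<in>ok oc. vecmat (rw r w) (G s) j)"
    by (subst sum.cartesian_product[symmetric]) (simp add: rw_snoc)
  also have "\<dots> = (\<Sum>s\<in>ok oc. \<Sum>w\<in>{w. matches c w}. vecmat (rw r w) (G s) j)"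
    by (rule sum.swap)
  also have "\<dots> = (\<Sum>s\<in>ok oc. vecmat (\<lambda>i. \<Sum>w\<in>{w. matches c w}. rw r w i) (G s) j)"
    by (simp add: vecmat_sum_fun)
  also have "(\<lambda>i. \<Sum>w\<in>{w. matches c w}. rw r w i) = runc r c"
    using snoc.IH by (simp add: fun_eq_iff)
  also have "(\<Sum>s\<in>ok oc. vecmat (runc r c) (G s) j) = runc r (c @ [oc]) j"
    by (simp add: stepc_ok runc_snoc)
  finally show ?case .
qed

lemma vecmat_nonneg: "(\<And>i. 0 \<le> r i) \<Longrightarrow> (\<And>i j. 0 \<le> A i j) \<Longrightarrow> 0 \<le> vecmat r A j"
  unfolding vecmat_def by (simp add: sum_nonneg)

lemma rw_nonneg: "(\<And>i. 0 \<le> r i) \<Longrightarrow> 0 \<le> rw r w j"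
proof (induction w arbitrary: j rule: rev_induct)
  case Nil then show ?case by (simp add: rw_def)
next
  case (snoc s w) then show ?case by (simp add: rw_snoc vecmat_nonneg G_nonneg)
qed

lemma norm1_nonneg_total: "(\<And>i. 0 \<le> r i) \<Longrightarrow> norm1 r = total r"
  unfolding norm1_def total_def by simp

lemma vecmat_lin: "vecmat (\<lambda>i. a * r i + b * s i) A j = a * vecmat r A j + b * vecmat s A j"
  unfolding vecmat_def by (simp add: algebra_simps sum.distrib sum_distrib_left)

lemma rw_lin: "rw (\<lambda>i. a * r i + b * s i) w = (\<lambda>j. a * rw r w j + b * rw s w j)"
proof (induction w rule: rev_induct)
  case Nil then show ?case by (simp add: rw_def)
next
  case (snoc x w) then show ?case by (simp add: rw_snoc vecmat_lin)
qed

lemma pow_lin: "((\<lambda>p. vecmat p TM) ^^ k) (\<lambda>i. a * r i + b * s i)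
   = (\<lambda>j. a * ((\<lambda>p. vecmat p TM) ^^ k) r j + b * ((\<lambda>p. vecmat p TM) ^^ k) s j)"
proof (induction k)
  case 0 then show ?case by simp
next
  case (Suc k) then show ?case by (simp add: vecmat_lin)
qed

lemma pow_P0: "((\<lambda>p. vecmat p TM) ^^ k) P0 = P0"
  by (induction k) (simp_all add: P0_fixed)

lemma vecmat_abs_le:
  assumes "\<And>i j. 0 \<le> A i j" "\<And>i. (\<Sum>j\<in>UNIV. A i j) \<le> 1"
  shows "(\<Sum>j\<in>UNIV. \<bar>vecmat r A j\<bar>) \<le> (\<Sum>i\<in>UNIV. \<bar>r i\<bar>)"
proof -
  have "(\<Sum>j\<in>UNIV. \<bar>vecmat r A j\<bar>) \<le> (\<Sum>j\<in>UNIV. \<Sum>i\<in>UNIV. \<bar>r i\<bar> * A i j)"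
    unfolding vecmat_def
    by (intro sum_mono order_trans[OF sum_abs]) (simp add: abs_mult assms(1))
  also have "\<dots> = (\<Sum>i\<in>UNIV. \<bar>r i\<bar> * (\<Sum>j\<in>UNIV. A i j))"
    by (subst sum.swap) (simp add: sum_distrib_left)
  also have "\<dots> \<le> (\<Sum>i\<in>UNIV. \<bar>r i\<bar>)"
    by (intro sum_mono) (simp add: assms(2) mult_left_le)
  finally show ?thesis .
qed

lemma G_row_le: "(\<Sum>j\<in>UNIV. G s i j) \<le> 1"
proof -
  have "pit i s \<le> (\<Sum>s\<in>UNIV. pit i s)" by (rule member_le_sum) (auto simp: pit_nonneg)
  then show ?thesis by (simp add: G_row pit_sum)
qed

lemma rw_abs_le: "(\<Sum>j\<in>UNIV. \<bar>rw r w j\<bar>) \<le> (\<Sum>i\<in>UNIV. \<bar>r i\<bar>)"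
proof (induction w rule: rev_induct)
  case Nil then show ?case by (simp add: rw_def)
next
  case (snoc s w)
  have "(\<Sum>j\<in>UNIV. \<bar>rw r (w @ [s]) j\<bar>) \<le> (\<Sum>j\<in>UNIV. \<bar>rw r w j\<bar>)"
    unfolding rw_snoc by (rule vecmat_abs_le) (auto simp: G_nonneg G_row_le)
  then show ?case using snoc by linarith
qed

lemma pow_abs_le: "(\<Sum>j\<in>UNIV. \<bar>((\<lambda>p. vecmat p TM) ^^ k) r j\<bar>) \<le> (\<Sum>i\<in>UNIV. \<bar>r i\<bar>)"
proof (induction k)
  case 0 then show ?case by simp
next
  case (Suc k)
  have "(\<Sum>j\<in>UNIV. \<bar>((\<lambda>p. vecmat p TM) ^^ Suc k) r j\<bar>) \<le> (\<Sum>j\<in>UNIV. \<bar>((\<lambda>p. vecmat p TM) ^^ k) r j\<bar>)"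
    by simp (rule vecmat_abs_le, auto simp: TM_nonneg TM_row)
  then show ?case using Suc by linarith
qed

lemma total_abs_le: "\<bar>total r\<bar> \<le> (\<Sum>i\<in>UNIV. \<bar>r i\<bar>)"
  unfolding total_def by (rule sum_abs)

end

locale pfm = pf delta pit for delta :: "'q::finite \<Rightarrow> 'a::finite \<Rightarrow> 'q" and pit +
  fixes M :: "'a stream measure"
  assumes rm: "realization_measure delta pit M"
begin

lemma PS: "prob_space M" using rm unfolding realization_measure_def by simp
lemma sets_M: "sets M = sets (stream_space (count_space UNIV))"
  using rm unfolding realization_measure_def by simp
lemma cyl_M: "measure M {\<omega> \<in> space M. stake (length w) \<omega> = w} = norm1 (wp_unnorm delta pit w)"
  using rm unfolding realization_measure_def by simp

lemma space_M: "space M = UNIV"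
proof -
  have "space M = space (stream_space (count_space (UNIV::'a set)))" by (rule sets_eq_imp_space_eq[OF sets_M])
  then show ?thesis by (simp add: space_stream_space)
qed

lemma stake_meas[measurable]: "stake n \<in> M \<rightarrow>\<^sub>M count_space UNIV"
  using measurable_stake measurable_cong_sets[OF sets_M refl] by blast

lemma cyl_sets: "{\<omega> \<in> space M. P (stake n \<omega>)} \<in> sets M"
  by measurable

lemma FM: "finite_measure M"
proof -
  interpret prob_space M by (rule PS)
  show ?thesis by (rule finite_measure_axioms)
qed

lemma cyl_total: "measure M {\<omega> \<in> space M. stake (length w) \<omega> = w} = total (rw P0 w)"
  unfolding cyl_M wp_unnorm_rw by (rule norm1_nonneg_total) (rule rw_nonneg, rule P0_nonneg)

lemma prob_matches: "measure M {\<omega> \<in> space M. matches c (stake (length c) \<omega>)} = total (runc P0 c)"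
proof -
  define W where "W = {w. matches c w}"
  have fin: "finite W" unfolding W_def by (rule finite_matches)
  have eq: "{\<omega> \<in> space M. matches c (stake (length c) \<omega>)}
      = (\<Union>w\<in>W. {\<omega> \<in> space M. stake (length c) \<omega> = w})"
    unfolding W_def by auto
  have "measure M (\<Union>w\<in>W. {\<omega> \<in> space M. stake (length c) \<omega> = w})
      = (\<Sum>w\<in>W. measure M {\<omega> \<in> space M. stake (length c) \<omega> = w})"
    by (rule finite_measure.finite_measure_finite_Union[OF FM fin])
       (auto simp: disjoint_family_on_def cyl_sets)
  also have "\<dots> = (\<Sum>w\<in>W. total (rw P0 w))"
  proof (rule sum.cong)
    fix w assume "w \<in> W"
    then have "length w = length c" unfolding W_def by (simp add: matches_length)
    then show "measure M {\<omega> \<in> space M. stake (length c) \<omega> = w} = total (rw P0 w)"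
      using cyl_total[of w] by simp
  qed simp
  also have "\<dots> = total (runc P0 c)"
    unfolding total_def W_def sum_matches[symmetric] by (rule sum.swap)
  finally show ?thesis using eq by simp
qed

lemma m_None: "list_all2 (\<lambda>oc a. a \<in> ok oc) (replicate i None) u \<longleftrightarrow> length u = i"
  by (auto simp: list_all2_conv_all_nth ok_def)

lemma m_Some: "list_all2 (\<lambda>oc a. a \<in> ok oc) (map Some y) v \<longleftrightarrow> v = y"
  by (induction y arbitrary: v) (auto simp: list_all2_Cons1 ok_def)

lemma matches_append: "matches (c1 @ c2) w \<longleftrightarrow>
   length w = length c1 + length c2 \<and> matches c1 (take (length c1) w) \<and> matches c2 (drop (length c1) w)"
proof
  assume "matches (c1 @ c2) w"
  then obtain us vs where "w = us @ vs" "length us = length c1" "length vs = length c2"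
     "list_all2 (\<lambda>oc a. a \<in> ok oc) c1 us" "list_all2 (\<lambda>oc a. a \<in> ok oc) c2 vs"
    unfolding matches_def by (auto simp: list_all2_append1 dest: list_all2_lengthD)
  then show "length w = length c1 + length c2 \<and> matches c1 (take (length c1) w) \<and> matches c2 (drop (length c1) w)"
    unfolding matches_def by simp
next
  assume a: "length w = length c1 + length c2 \<and> matches c1 (take (length c1) w) \<and> matches c2 (drop (length c1) w)"
  have "w = take (length c1) w @ drop (length c1) w" by simp
  then show "matches (c1 @ c2) w" using a unfolding matches_def
    by (metis list_all2_appendI)
qed

definition ev :: "'a list \<Rightarrow> nat \<Rightarrow> 'a stream set" where
  "ev y i = {\<omega> \<in> space M. drop i (stake (i + length y) \<omega>) = y}"

lemma ev_sets: "ev y i \<in> sets M" unfolding ev_def by (rule cyl_sets)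

lemma ev_matches: "ev y i = {\<omega> \<in> space M. matches (replicate i None @ map Some y) (stake (length (replicate i None @ map Some y)) \<omega>)}"
  unfolding ev_def by (simp only: matches_append) (auto simp: matches_def m_None m_Some)

lemma prob_ev: "measure M (ev y i) = total (rw P0 y)"
  unfolding ev_matches prob_matches runc_append runc_None runc_Some pow_P0 ..

lemma ev_pair: "ev y i \<inter> ev y (i + length y + k) =
  {\<omega> \<in> space M. matches ((replicate i None @ map Some y) @ (replicate k None @ map Some y))
     (stake (length ((replicate i None @ map Some y) @ (replicate k None @ map Some y))) \<omega>)}"
proof -
  have "(\<omega> \<in> ev y i \<inter> ev y (i + length y + k)) =
        (\<omega> \<in> {\<omega> \<in> space M. matches ((replicate i None @ map Some y) @ (replicate k None @ map Some y))
     (stake (length ((replicate i None @ map Some y) @ (replicate k None @ map Some y))) \<omega>)})" for \<omega>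
  proof -
    show ?thesis unfolding ev_def
      by (simp only: matches_append) (simp add: matches_def m_None m_Some take_stake min_def ac_simps)
  qed
  then show ?thesis by blast
qed

abbreviation "pw k \<equiv> (\<lambda>p. vecmat p TM) ^^ k"

lemma prob_pair: "measure M (ev y i \<inter> ev y (i + length y + k)) = total (rw (pw k (rw P0 y)) y)"
  unfolding ev_pair prob_matches runc_append runc_None runc_Some pow_P0 ..

end

sublocale pfm \<subseteq> P: prob_space M by (rule PS)

context pfm begin

definition X :: "'a list \<Rightarrow> nat \<Rightarrow> 'a stream \<Rightarrow> real" where
  "X y i \<omega> = indicator (ev y i) \<omega>"

definition S :: "'a list \<Rightarrow> nat \<Rightarrow> 'a stream \<Rightarrow> real" where
  "S y N \<omega> = (\<Sum>i<N. X y i \<omega>)"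

definition mu :: "'a list \<Rightarrow> real" where
  "mu y = total (rw P0 y)"

lemma probU[simp]: "measure M UNIV = 1" using P.prob_space space_M by simp

lemma X_meas[measurable]: "X y i \<in> borel_measurable M"
  unfolding X_def using ev_sets by measurable

lemma int_X[simp]: "integrable M (X y i)"
  unfolding X_def using ev_sets by (intro integrable_real_indicator) (auto simp: less_top[symmetric] sets.Int)

lemma int_ind[simp]: "integrable M (\<lambda>\<omega>. indicator (ev y i \<inter> ev y j) \<omega> :: real)"
  using ev_sets by (intro integrable_real_indicator) (auto simp: less_top[symmetric] sets.Int)

lemma E_X: "integral\<^sup>L M (X y i) = mu y"
  unfolding X_def mu_def using ev_sets by (simp add: prob_ev P.prob_space space_M)

lemma mu_bounds: "0 \<le> mu y" "mu y \<le> 1"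
  using prob_ev[of y 0] P.prob_le_1[of "ev y 0"] measure_nonneg[of M "ev y 0"] unfolding mu_def by auto

lemma prod_eq: "(\<lambda>\<omega>. (X y i \<omega> - c) * (X y j \<omega> - c)) =
   (\<lambda>\<omega>. indicator (ev y i \<inter> ev y j) \<omega> - c * X y i \<omega> - c * X y j \<omega> + c^2)"
  by (auto simp: X_def indicator_def fun_eq_iff power2_eq_square algebra_simps)

lemma int_prod[simp]: "integrable M (\<lambda>\<omega>. (X y i \<omega> - c) * (X y j \<omega> - c))"
  unfolding prod_eq
  by (intro Bochner_Integration.integrable_add Bochner_Integration.integrable_diff
      integrable_mult_right int_X int_ind P.integrable_const)

lemma E_prod: "integral\<^sup>L M (\<lambda>\<omega>. (X y i \<omega> - mu y) * (X y j \<omega> - mu y))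
   = measure M (ev y i \<inter> ev y j) - (mu y)^2"
proof -
  have "integral\<^sup>L M (\<lambda>\<omega>. indicator (ev y i \<inter> ev y j) \<omega> - mu y * X y i \<omega> - mu y * X y j \<omega> + (mu y)^2)
     = measure M (ev y i \<inter> ev y j) - mu y * mu y - mu y * mu y + (mu y)^2"
    using ev_sets
    by (simp add: Bochner_Integration.integral_add Bochner_Integration.integral_diff E_X P.prob_space space_M
          integrable_diff integrable_add sets.Int)
  then show ?thesis unfolding prod_eq by (simp add: power2_eq_square)
qed

lemma S_centered: "S y N \<omega> - real N * c = (\<Sum>i<N. X y i \<omega> - c)"
  unfolding S_def by (simp add: sum_subtractf)

lemma sq_eq: "(\<lambda>\<omega>. (S y N \<omega> - real N * c)^2) = (\<lambda>\<omega>. \<Sum>i<N. \<Sum>j<N. (X y i \<omega> - c) * (X y j \<omega> - c))"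
  unfolding S_centered power2_eq_square sum_product ..

lemma int_sq[simp]: "integrable M (\<lambda>\<omega>. (S y N \<omega> - real N * c)^2)"
  unfolding sq_eq by (intro Bochner_Integration.integrable_sum int_prod)

lemma E_sq: "integral\<^sup>L M (\<lambda>\<omega>. (S y N \<omega> - real N * mu y)^2)
   = (\<Sum>i<N. \<Sum>j<N. measure M (ev y i \<inter> ev y j) - (mu y)^2)"
  unfolding sq_eq
  by (simp add: Bochner_Integration.integral_sum integrable_sum E_prod)

lemma E_S: "integral\<^sup>L M (S y N) = real N * mu y"
  unfolding S_def by (simp add: Bochner_Integration.integral_sum E_X)

lemma S_meas[measurable]: "S y N \<in> borel_measurable M"
  unfolding S_def by measurable

lemma T_lin: "total (rw (\<lambda>i. a * r i + b * s i) y) = a * total (rw r y) + b * total (rw s y)"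
  unfolding rw_lin total_def by (simp add: sum.distrib sum_distrib_left)

lemma T_abs: "\<bar>total (rw r y)\<bar> \<le> (\<Sum>i\<in>UNIV. \<bar>r i\<bar>)"
  using total_abs_le[of "rw r y"] rw_abs_le[of r y] by linarith

lemma cesaro: "\<exists>B. \<forall>K. \<bar>\<Sum>k<K. total (rw (pw k (rw P0 y)) y) - (mu y)^2\<bar> \<le> B"
proof -
  define a where "a = rw P0 y"
  define m where "m = mu y"
  define T where "T r = total (rw r y)" for r
  have Tl: "T (\<lambda>i. \<alpha> * r i + \<beta> * s i) = \<alpha> * T r + \<beta> * T s" for \<alpha> \<beta> r s
    unfolding T_def by (rule T_lin)
  have TP0: "T P0 = m" unfolding T_def m_def mu_def ..
  define d where "d i = 1 * a i + (- m) * P0 i" for i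
  have "total a = m" unfolding a_def m_def mu_def ..
  then have "(\<Sum>j\<in>UNIV. d j) = 0" unfolding d_def total_def
    by (simp add: sum_subtractf sum_distrib_left[symmetric] P0_sum)
  then obtain g where g: "\<And>j. g j - vecmat g TM j = d j" using poisson by blast
  have dg: "d = (\<lambda>i. 1 * g i + (-1) * vecmat g TM i)" using g by (auto simp: fun_eq_iff)
  have fk: "T (pw k a) - m^2 = T (pw k g) - T (pw (Suc k) g)" for k
  proof -
    have "T (pw k a) - m^2 = T (pw k a) - m * T (pw k P0)"
      by (simp add: pow_P0 TP0 power2_eq_square)
    also have "\<dots> = T (\<lambda>j. 1 * pw k a j + (- m) * pw k P0 j)" by (simp only: Tl)
    also have "(\<lambda>j. 1 * pw k a j + (- m) * pw k P0 j) = pw k d"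
      unfolding d_def by (simp only: pow_lin)
    also have "pw k d = (\<lambda>j. 1 * pw k g j + (-1) * pw k (vecmat g TM) j)"
      unfolding dg by (rule pow_lin)
    also have "pw k (vecmat g TM) = pw (Suc k) g" by (simp only: funpow_Suc_right o_def)
    finally show ?thesis by (simp only: Tl)
  qed
  have "\<bar>\<Sum>k<K. T (pw k a) - m^2\<bar> \<le> 2 * (\<Sum>i\<in>UNIV. \<bar>g i\<bar>)" for K
  proof -
    have "(\<Sum>k<K. T (pw k a) - m^2) = T (pw 0 g) - T (pw K g)"
      unfolding fk by (rule sum_lessThan_telescope')
    moreover have "\<bar>T (pw 0 g)\<bar> \<le> (\<Sum>i\<in>UNIV. \<bar>g i\<bar>)" unfolding T_def using T_abs[of "pw 0 g" y] by simp
    moreover have "\<bar>T (pw K g)\<bar> \<le> (\<Sum>i\<in>UNIV. \<bar>g i\<bar>)"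
      unfolding T_def using T_abs[of "pw K g" y] pow_abs_le[of K g] by linarith
    ultimately show ?thesis by linarith
  qed
  then show ?thesis unfolding T_def a_def m_def by blast
qed

lemma var_le: assumes "y \<noteq> []"
  shows "\<exists>C. \<forall>N. integral\<^sup>L M (\<lambda>\<omega>. (S y N \<omega> - real N * mu y)^2) \<le> real N * C"
proof -
  obtain B where B: "\<And>K. \<bar>\<Sum>k<K. total (rw (pw k (rw P0 y)) y) - (mu y)^2\<bar> \<le> B"
    using cesaro by blast
  define c where "c i j = measure M (ev y i \<inter> ev y j) - (mu y)^2" for i j
  have "\<bar>\<Sum>i<N. \<Sum>j<N. c i j\<bar> \<le> real N * (2 * real (length y) + 2 * B)" for N
  proof (rule var_bound[where f = "\<lambda>k. total (rw (pw k (rw P0 y)) y) - (mu y)^2"])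
    show "c i j = c j i" for i j unfolding c_def by (simp add: Int_commute)
    show "\<bar>c i j\<bar> \<le> 1" for i j
    proof -
      have "0 \<le> measure M (ev y i \<inter> ev y j)" "measure M (ev y i \<inter> ev y j) \<le> 1" by (auto simp: P.prob_le_1)
      moreover have "0 \<le> (mu y)^2" "(mu y)^2 \<le> 1" using mu_bounds[of y] by (auto simp: power_le_one)
      ultimately show ?thesis unfolding c_def by linarith
    qed
    show "c i (i + length y + k) = total (rw (pw k (rw P0 y)) y) - (mu y)^2" for i k
      unfolding c_def prob_pair ..
    show "\<bar>\<Sum>k<K. total (rw (pw k (rw P0 y)) y) - (mu y)^2\<bar> \<le> B" for K by (rule B)
    show "1 \<le> length y" using assms by (cases y) auto
  qed
  then have "(\<Sum>i<N. \<Sum>j<N. c i j) \<le> real N * (2 * real (length y) + 2 * B)" for N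
    using abs_le_D1 by blast
  then show ?thesis unfolding E_sq c_def by (intro exI[of _ "2 * real (length y) + 2 * B"]) auto
qed

end

context pfm begin

lemma X_nonneg: "0 \<le> X y i \<omega>" unfolding X_def by simp

lemma S_mono: "mono (\<lambda>N. S y N \<omega>)"
  unfolding S_def by (rule monoI) (auto intro!: sum_mono2 X_nonneg)

lemma S_nonneg: "0 \<le> S y N \<omega>" unfolding S_def by (intro sum_nonneg X_nonneg)

lemma zero_case: assumes "mu y = 0" shows "AE \<omega> in M. \<forall>N. S y N \<omega> = 0"
proof -
  have "AE \<omega> in M. X y i \<omega> = 0" for i
  proof -
    have "integral\<^sup>L M (X y i) = 0" using E_X assms by simp
    then show ?thesis
      using integral_nonneg_eq_0_iff_AE[of M "X y i"] X_nonneg by auto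
  qed
  then have "AE \<omega> in M. \<forall>i. X y i \<omega> = 0" by (simp add: AE_all_countable)
  then show ?thesis by eventually_elim (simp add: S_def)
qed

lemma cheb:
  assumes C: "\<And>N. integral\<^sup>L M (\<lambda>\<omega>. (S y N \<omega> - real N * mu y)^2) \<le> real N * C"
    and d: "0 < \<delta>" and n: "1 \<le> n"
  shows "measure M {\<omega> \<in> space M. \<delta> * real (n^2) \<le> \<bar>S y (n^2) \<omega> - real (n^2) * mu y\<bar>}
     \<le> C / \<delta>^2 * inverse (real n ^ 2)"
proof -
  have npos: "0 < real (n^2)" using n by simp
  have a: "0 < \<delta> * real (n^2)" using d npos by simp
  have int2: "integrable M (\<lambda>\<omega>. (S y (n^2) \<omega>)^2)" using int_sq[of y "n^2" 0] by simp
  have "measure M {\<omega> \<in> space M. \<delta> * real (n^2) \<le> \<bar>S y (n^2) \<omega> - P.expectation (S y (n^2))\<bar>}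
      \<le> P.variance (S y (n^2)) / (\<delta> * real (n^2))^2"
    by (rule P.Chebyshev_inequality[OF _ int2 a]) simp
  also have "P.variance (S y (n^2)) = integral\<^sup>L M (\<lambda>\<omega>. (S y (n^2) \<omega> - real (n^2) * mu y)^2)"
    by (simp add: E_S)
  also have "\<dots> / (\<delta> * real (n^2))^2 \<le> (real (n^2) * C) / (\<delta> * real (n^2))^2"
    using C[of "n^2"] by (intro divide_right_mono) auto
  also have "\<dots> = C / \<delta>^2 * inverse (real n ^ 2)"
    using npos d by (simp add: field_simps power2_eq_square)
  finally show ?thesis by (simp add: E_S)
qed

lemma slln: assumes "y \<noteq> []" shows "AE \<omega> in M. (\<lambda>N. S y N \<omega> / real N) \<longlonglongrightarrow> mu y"
proof -
  obtain C where C: "\<And>N. integral\<^sup>L M (\<lambda>\<omega>. (S y N \<omega> - real N * mu y)^2) \<le> real N * C"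
    using var_le[OF assms] by blast
  define A where "A \<delta> n = {\<omega> \<in> space M. \<delta> * real (n^2) \<le> \<bar>S y (n^2) \<omega> - real (n^2) * mu y\<bar>}" for \<delta> n
  have ev: "AE \<omega> in M. eventually (\<lambda>n. \<omega> \<in> space M - A \<delta> n) sequentially" if d: "0 < \<delta>" for \<delta>
  proof (rule borel_cantelli_AE1)
    show "A \<delta> n \<in> sets M" for n unfolding A_def by measurable
    show "emeasure M (A \<delta> n) < \<infinity>" for n by (simp add: less_top[symmetric])
    have s: "summable (\<lambda>n. C / \<delta>^2 * inverse (real n ^ 2))"
      by (intro summable_mult inverse_power_summable) simp
    show "summable (\<lambda>n. measure M (A \<delta> n))"
    proof (rule summable_comparison_test'[OF s])
      fix n :: nat assume "1 \<le> n"
      then show "norm (measure M (A \<delta> n)) \<le> C / \<delta>^2 * inverse (real n ^ 2)"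
        unfolding A_def using cheb[OF C d] by simp
    qed
  qed
  have "AE \<omega> in M. \<forall>l::nat. eventually (\<lambda>n. \<omega> \<in> space M - A (1 / real (Suc l)) n) sequentially"
    by (subst AE_all_countable) (intro allI ev, simp)
  then show ?thesis
  proof eventually_elim
    case (elim \<omega>)
    have sq: "(\<lambda>k. S y (k^2) \<omega> / real (k^2)) \<longlonglongrightarrow> mu y"
      unfolding LIMSEQ_iff
    proof (intro allI impI)
      fix r :: real assume r: "0 < r"
      obtain l where l: "inverse (real (Suc l)) < r" using r reals_Archimedean by blast
      obtain no where no: "\<And>n. no \<le> n \<Longrightarrow> \<omega> \<in> space M - A (1 / real (Suc l)) n"
        using elim[rule_format, of l] unfolding eventually_sequentially by blast
      show "\<exists>no. \<forall>n\<ge>no. norm (S y (n^2) \<omega> / real (n^2) - mu y) < r"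
      proof (intro exI[of _ "max no 1"] allI impI)
        fix n assume "max no 1 \<le> n"
        then have n: "no \<le> n" "1 \<le> n" by auto
        have npos: "0 < real (n^2)" using n by simp
        have "\<bar>S y (n^2) \<omega> - real (n^2) * mu y\<bar> < 1 / real (Suc l) * real (n^2)"
          using no[OF n(1)] space_M unfolding A_def by auto
        then have "\<bar>S y (n^2) \<omega> - real (n^2) * mu y\<bar> / real (n^2) < 1 / real (Suc l)"
          using npos by (simp add: divide_less_eq)
        moreover have "\<bar>S y (n^2) \<omega> - real (n^2) * mu y\<bar> / real (n^2) = \<bar>S y (n^2) \<omega> / real (n^2) - mu y\<bar>"
          using npos by (simp add: field_simps abs_divide)
        ultimately show "norm (S y (n^2) \<omega> / real (n^2) - mu y) < r"
          using l by (simp add: inverse_eq_divide)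
      qed
    qed
    show ?case by (rule interp[OF S_mono S_nonneg sq])
  qed
qed

end

context pfm begin

lemma sum_card: "finite A \<Longrightarrow> (\<Sum>i\<in>A. if P i then 1 else 0) = real (card {i\<in>A. P i})"
  by (simp add: sum.If_cases Int_def conj_commute)

lemma occ_S: assumes "y \<noteq> []"
  shows "real (occ_count (stake n \<omega>) y) = S y (n + 1 - length y) \<omega>"
proof -
  have L1: "1 \<le> length y" using assms by (cases y) auto
  have "{i. i + length y \<le> length (stake n \<omega>) \<and> take (length y) (drop i (stake n \<omega>)) = y}
      = {i \<in> {..<n + 1 - length y}. \<omega> \<in> ev y i}"
  proof (intro set_eqI iffI)
    fix i assume "i \<in> {i. i + length y \<le> length (stake n \<omega>) \<and> take (length y) (drop i (stake n \<omega>)) = y}"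
    then have h: "i + length y \<le> n" "drop i (take (length y + i) (stake n \<omega>)) = y" by (auto simp: take_drop)
    then have "drop i (stake (i + length y) \<omega>) = y" by (simp add: take_stake min_def add.commute)
    then show "i \<in> {i \<in> {..<n + 1 - length y}. \<omega> \<in> ev y i}"
      using h(1) L1 unfolding ev_def space_M by auto
  next
    fix i assume "i \<in> {i \<in> {..<n + 1 - length y}. \<omega> \<in> ev y i}"
    then have h: "i + length y \<le> n" "drop i (stake (i + length y) \<omega>) = y"
      using L1 unfolding ev_def by auto
    then have "drop i (take (length y + i) (stake n \<omega>)) = y" by (simp add: take_stake min_def add.commute)
    then show "i \<in> {i. i + length y \<le> length (stake n \<omega>) \<and> take (length y) (drop i (stake n \<omega>)) = y}"
      using h(1) by (simp add: take_drop)
  qed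
  then show ?thesis
    unfolding occ_count_def S_def X_def indicator_def
    by (simp add: sum_card) (simp add: Collect_conj_eq lessThan_def)
qed

lemma symb_S: "symb_deriv (stake n \<omega>) x \<sigma>
   = S (x @ [\<sigma>]) (n - length x) \<omega> / (\<Sum>\<sigma>'\<in>UNIV. S (x @ [\<sigma>']) (n - length x) \<omega>)"
  unfolding symb_deriv_def by (simp add: occ_S)

lemma mu_snoc: "mu (x @ [\<sigma>]) = (\<Sum>i\<in>UNIV. rw P0 x i * pit i \<sigma>)"
proof -
  have "mu (x @ [\<sigma>]) = (\<Sum>j\<in>UNIV. \<Sum>i\<in>UNIV. rw P0 x i * G \<sigma> i j)"
    unfolding mu_def total_def rw_snoc vecmat_def ..
  also have "\<dots> = (\<Sum>i\<in>UNIV. rw P0 x i * (\<Sum>j\<in>UNIV. G \<sigma> i j))"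
    by (subst sum.swap) (simp add: sum_distrib_left)
  finally show ?thesis by (simp add: G_row)
qed

lemma mu_sum: "(\<Sum>\<sigma>\<in>UNIV. mu (x @ [\<sigma>])) = mu x"
proof -
  have "(\<Sum>\<sigma>\<in>UNIV. mu (x @ [\<sigma>])) = (\<Sum>\<sigma>\<in>UNIV. \<Sum>j\<in>UNIV. vecmat (rw P0 x) (G \<sigma>) j)"
    unfolding mu_def total_def rw_snoc ..
  also have "\<dots> = (\<Sum>j\<in>UNIV. \<Sum>\<sigma>\<in>UNIV. vecmat (rw P0 x) (G \<sigma>) j)" by (rule sum.swap)
  also have "\<dots> = (\<Sum>j\<in>UNIV. vecmat (rw P0 x) TM j)" by (simp add: sum_G_TM)
  also have "\<dots> = mu x" unfolding vecmat_sum mu_def total_def ..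
  finally show ?thesis .
qed

lemma rwx_nonneg: "0 \<le> rw P0 x i" by (rule rw_nonneg) (rule P0_nonneg)

lemma wp_eq: "wp delta pit x = (\<lambda>i. rw P0 x i / mu x)"
  unfolding wp_def wp_unnorm_rw mu_def using norm1_nonneg_total[of "rw P0 x"] rwx_nonneg by simp

lemma final_bound:
  assumes sync: "norm_inf (\<lambda>i. wp delta pit x i - basis_vec q i) \<le> \<epsilon>" and mx: "0 < mu x"
  shows "norm_inf (\<lambda>\<sigma>. mu (x @ [\<sigma>]) / mu x - pit q \<sigma>) \<le> \<epsilon>"
proof (rule ni_le)
  fix \<sigma>
  define w where "w i = rw P0 x i / mu x" for i
  have wn: "0 \<le> w i" for i unfolding w_def using rwx_nonneg mx by simp
  have ws: "(\<Sum>i\<in>UNIV. w i) = 1" unfolding w_def using mx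
    by (simp add: sum_divide_distrib[symmetric] mu_def total_def)
  have wq: "\<bar>w q - 1\<bar> \<le> \<epsilon>"
    using ni_ge[of "\<lambda>i. wp delta pit x i - basis_vec q i" q] sync
    unfolding wp_eq basis_vec_def w_def by simp
  have eq: "mu (x @ [\<sigma>]) / mu x = (\<Sum>i\<in>UNIV. w i * pit i \<sigma>)"
    unfolding mu_snoc w_def by (simp add: sum_divide_distrib)
  define D where "D = (\<Sum>i\<in>UNIV - {q}. w i * pit i \<sigma>)"
  have split: "(\<Sum>i\<in>UNIV. w i * pit i \<sigma>) = w q * pit q \<sigma> + D"
    unfolding D_def by (rule sum.remove) auto
  have ws2: "(\<Sum>i\<in>UNIV. w i) = w q + (\<Sum>i\<in>UNIV - {q}. w i)" by (rule sum.remove) auto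
  have D0: "0 \<le> D" unfolding D_def by (intro sum_nonneg) (simp add: wn pit_nonneg)
  have pit1: "pit i \<sigma> \<le> 1" for i
  proof -
    have "pit i \<sigma> \<le> (\<Sum>s\<in>UNIV. pit i s)" by (rule member_le_sum) (auto simp: pit_nonneg)
    then show ?thesis by (simp add: pit_sum)
  qed
  have D1: "D \<le> (\<Sum>i\<in>UNIV - {q}. w i)" unfolding D_def
    by (intro sum_mono) (simp add: wn pit1 mult_left_le)
  have wq1: "w q \<le> 1" using ws ws2 sum_nonneg[of "UNIV - {q}" w] wn by simp
  have p0: "0 \<le> pit q \<sigma>" by (rule pit_nonneg)
  have up: "(w q - 1) * pit q \<sigma> \<le> 0" using wq1 p0 by (simp add: mult_nonpos_nonneg)
  have lo: "w q - 1 \<le> (w q - 1) * pit q \<sigma>"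
  proof -
    have "(w q - 1) * 1 \<le> (w q - 1) * pit q \<sigma>"
      using wq1 pit1[of q] by (intro mult_left_mono_neg) auto
    then show ?thesis by simp
  qed
  have "mu (x @ [\<sigma>]) / mu x - pit q \<sigma> = (w q - 1) * pit q \<sigma> + D"
    unfolding eq split by (simp add: algebra_simps)
  then show "\<bar>mu (x @ [\<sigma>]) / mu x - pit q \<sigma>\<bar> \<le> \<epsilon>"
    using up lo D0 D1 ws ws2 wq by (simp add: abs_le_iff)
qed

lemma main_loc:
  assumes sync: "norm_inf (\<lambda>i. wp delta pit x i - basis_vec q i) \<le> \<epsilon>"
  shows "AE \<omega> in M.
           convergent (\<lambda>n. norm_inf (\<lambda>\<sigma>. symb_deriv (stake n \<omega>) x \<sigma> - pit q \<sigma>)) \<and>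
           lim (\<lambda>n. norm_inf (\<lambda>\<sigma>. symb_deriv (stake n \<omega>) x \<sigma> - pit q \<sigma>)) \<le> \<epsilon>"
proof -
  have mxn: "0 \<le> mu x" using mu_bounds by simp
  show ?thesis
  proof (cases "mu x = 0")
    case True
    have m0: "mu (x @ [\<sigma>]) = 0" for \<sigma>
    proof -
      have "(\<Sum>\<sigma>\<in>UNIV. mu (x @ [\<sigma>])) = 0" using mu_sum True by simp
      then show ?thesis using mu_bounds by (simp add: sum_nonneg_eq_0_iff)
    qed
    have "AE \<omega> in M. \<forall>\<sigma>\<in>UNIV. \<forall>N. S (x @ [\<sigma>]) N \<omega> = 0"
      by (intro AE_finite_allI zero_case m0) simp
    then show ?thesis
    proof eventually_elim
      case (elim \<omega>)
      have const: "(\<lambda>n. norm_inf (\<lambda>\<sigma>. symb_deriv (stake n \<omega>) x \<sigma> - pit q \<sigma>)) = (\<lambda>n. norm_inf (\<lambda>\<sigma>. - pit q \<sigma>))"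
        using elim by (simp add: symb_S)
      have e1: "1 \<le> \<epsilon>"
      proof -
        have "wp delta pit x = (\<lambda>_. 0)" unfolding wp_eq True by simp
        then show ?thesis using ni_ge[of "\<lambda>i. wp delta pit x i - basis_vec q i" q] sync
          by (simp add: basis_vec_def)
      qed
      have "norm_inf (\<lambda>\<sigma>. - pit q \<sigma>) \<le> 1"
      proof (rule ni_le)
        fix \<sigma>
        have "pit q \<sigma> \<le> (\<Sum>s\<in>UNIV. pit q s)" by (rule member_le_sum) (auto simp: pit_nonneg)
        then show "\<bar>- pit q \<sigma>\<bar> \<le> 1" by (simp add: pit_sum pit_nonneg)
      qed
      then show ?case unfolding const using e1 by (simp add: convergent_const)
    qed
  next
    case False
    then have mx: "0 < mu x" using mxn by simp
    have "AE \<omega> in M. \<forall>\<sigma>\<in>UNIV. (\<lambda>N. S (x @ [\<sigma>]) N \<omega> / real N) \<longlonglongrightarrow> mu (x @ [\<sigma>])"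
      by (intro AE_finite_allI slln) simp_all
    then show ?thesis
    proof eventually_elim
      case (elim \<omega>)
      define R where "R N \<sigma> = S (x @ [\<sigma>]) N \<omega> / (\<Sum>\<sigma>'\<in>UNIV. S (x @ [\<sigma>']) N \<omega>)" for N \<sigma>
      have R_eq: "R N \<sigma> = (S (x @ [\<sigma>]) N \<omega> / real N) / (\<Sum>\<sigma>'\<in>UNIV. S (x @ [\<sigma>']) N \<omega> / real N)" for N \<sigma>
      proof (cases "N = 0")
        case True then show ?thesis unfolding R_def by (simp add: S_def)
      next
        case False then show ?thesis unfolding R_def by (simp add: sum_divide_distrib[symmetric])
      qed
      have RL: "(\<lambda>N. R N \<sigma>) \<longlonglongrightarrow> mu (x @ [\<sigma>]) / mu x" for \<sigma>
      proof -
        have "(\<lambda>N. (S (x @ [\<sigma>]) N \<omega> / real N) / (\<Sum>\<sigma>'\<in>UNIV. S (x @ [\<sigma>']) N \<omega> / real N))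
             \<longlonglongrightarrow> mu (x @ [\<sigma>]) / (\<Sum>\<sigma>'\<in>UNIV. mu (x @ [\<sigma>']))"
          using elim mx mu_sum by (intro tendsto_intros) auto
        then show ?thesis unfolding R_eq mu_sum .
      qed
      have phi: "(\<lambda>n. symb_deriv (stake n \<omega>) x \<sigma> - pit q \<sigma>) \<longlonglongrightarrow> mu (x @ [\<sigma>]) / mu x - pit q \<sigma>" for \<sigma>
      proof -
        have "(\<lambda>n. R (n - length x) \<sigma>) \<longlonglongrightarrow> mu (x @ [\<sigma>]) / mu x"
          by (rule filterlim_compose[OF RL filterlim_minus_const_nat_at_top])
        then show ?thesis unfolding R_def symb_S[symmetric] by (intro tendsto_intros)
      qed
      have lim: "(\<lambda>n. norm_inf (\<lambda>\<sigma>. symb_deriv (stake n \<omega>) x \<sigma> - pit q \<sigma>))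
          \<longlonglongrightarrow> norm_inf (\<lambda>\<sigma>. mu (x @ [\<sigma>]) / mu x - pit q \<sigma>)"
        by (rule ni_tendsto[OF phi])
      show ?case using lim final_bound[OF sync mx] by (auto simp: convergent_def limI)
    qed
  qed
qed

end

theorem mainTheorem5:
  fixes delta :: "'q::finite \<Rightarrow> 'a::finite \<Rightarrow> 'q"
    and pit :: "'q \<Rightarrow> 'a \<Rightarrow> real"
    and M :: "'a stream measure"
    and \<epsilon> :: real and x :: "'a list" and q :: 'q
  assumes "pfsa delta pit"
    and "realization_measure delta pit M"
    and "\<epsilon> > 0"
    and "eps_synchronizing delta pit \<epsilon> x"
    and "norm_inf (\<lambda>i. wp delta pit x i - basis_vec q i) \<le> \<epsilon>"
  shows "AE \<omega> in M.
           convergent (\<lambda>n. norm_inf (\<lambda>\<sigma>. symb_deriv (stake n \<omega>) x \<sigma> - pit q \<sigma>)) \<and>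
           lim (\<lambda>n. norm_inf (\<lambda>\<sigma>. symb_deriv (stake n \<omega>) x \<sigma> - pit q \<sigma>)) \<le> \<epsilon>"
proof -
  interpret pfm delta pit M
    by (rule pfm.intro[OF pf.intro[OF assms(1)] pfm_axioms.intro[OF assms(2)]])
  show ?thesis by (rule main_loc[OF assms(5)])
qed

end
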